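(* Let $M$ be a strongly sofic monoid and let $K$ be a field. Then the monoid algebra $K[M]$ is stably finite.
   Context: A monoid $M$ is strongly sofic if for every finite subset $F \subset M$ there exists an integer $\Delta_F \geq 1$ such that for every $\varepsilon > 0$ there exist a non-empty finite set $D$ and a map $\sigma \colon M \to \operatorname{Map}(D)$ (where $\operatorname{Map}(D)$ is the monoid of all maps $D \to D$ under composition) satisfying: (1) $\sigma(1_M) = \mathrm{Id}_D$; (2) $d_D^{\mathrm{Ham}}(\sigma(k_1k_2),\sigma(k_1)\sigma(k_2)) \leq \varepsilon$ for all $k_1,k_2 \in F$; (3) $d_D^{\mathrm{Ham}}(\sigma(k_1),\sigma(k_2)) \geq 1-\varepsilon$ for all distinct $k_1,k_2 \in F$; (4) $|\sigma(k)^{-1}(v)| \leq \Delta_F$ for all $k \in F$, $v \in D$. Here $d_D^{\mathrm{Ham}}(f,g) = \frac{1}{|D|}|\{v \in D : f(v) \neq g(v)\}|$. A ring $R$ is stably finite if for every integer $d \geq 1$ the multiplicative monoid of $d \times d$ matrices over $R$ is directly finite, i.e., $XY = I$ implies $YX = I$. *)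

theory Defs
  imports Main "HOL.Real"
begin

text \<open>Finite sets D are taken as finite subsets of nat (every finite set is in bijection
with such a set). An element of Map(D) is represented by a function nat => nat mapping D
into D; only its values on D matter.\<close>

definition ham_dist :: "nat set \<Rightarrow> (nat \<Rightarrow> nat) \<Rightarrow> (nat \<Rightarrow> nat) \<Rightarrow> real" where
  "ham_dist D f g = real (card {v \<in> D. f v \<noteq> g v}) / real (card D)"

definition strongly_sofic :: "'m::monoid_mult itself \<Rightarrow> bool" where
  "strongly_sofic _ \<longleftrightarrow>
    (\<forall>F :: 'm set. finite F \<longrightarrow>
      (\<exists>\<Delta>::nat. \<Delta> \<ge> 1 \<and>
        (\<forall>\<epsilon>::real. \<epsilon> > 0 \<longrightarrow>
          (\<exists>(D :: nat set) (\<sigma> :: 'm \<Rightarrow> nat \<Rightarrow> nat).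
             finite D \<and> D \<noteq> {} \<and>
             (\<forall>k. \<sigma> k ` D \<subseteq> D) \<and>
             (\<forall>v\<in>D. \<sigma> 1 v = v) \<and>
             (\<forall>k1\<in>F. \<forall>k2\<in>F. ham_dist D (\<sigma> (k1 * k2)) (\<sigma> k1 \<circ> \<sigma> k2) \<le> \<epsilon>) \<and>
             (\<forall>k1\<in>F. \<forall>k2\<in>F. k1 \<noteq> k2 \<longrightarrow> ham_dist D (\<sigma> k1) (\<sigma> k2) \<ge> 1 - \<epsilon>) \<and>
             (\<forall>k\<in>F. \<forall>v\<in>D. card {u \<in> D. \<sigma> k u = v} \<le> \<Delta>)))))"

text \<open>Elements of K[M] are finitely supported functions M => K; addition is pointwise,
multiplication is convolution.\<close>

definition ma_elem :: "('m \<Rightarrow> 'k::zero) \<Rightarrow> bool" where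
  "ma_elem f \<longleftrightarrow> finite {m. f m \<noteq> 0}"

definition ma_mult :: "('m::monoid_mult \<Rightarrow> 'k::field) \<Rightarrow> ('m \<Rightarrow> 'k) \<Rightarrow> ('m \<Rightarrow> 'k)" where
  "ma_mult f g = (\<lambda>m. \<Sum>p \<in> {p. fst p * snd p = m \<and> f (fst p) \<noteq> 0 \<and> g (snd p) \<noteq> 0}.
                       f (fst p) * g (snd p))"

definition ma_one :: "'m::monoid_mult \<Rightarrow> 'k::field" where
  "ma_one = (\<lambda>m. if m = 1 then 1 else 0)"

text \<open>A d x d matrix is a function nat => nat => K[M], only indices < d are relevant.\<close>

definition ma_matrix :: "nat \<Rightarrow> (nat \<Rightarrow> nat \<Rightarrow> ('m \<Rightarrow> 'k::zero)) \<Rightarrow> bool" where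
  "ma_matrix d X \<longleftrightarrow> (\<forall>i<d. \<forall>j<d. ma_elem (X i j))"

definition ma_mat_mult :: "nat \<Rightarrow> (nat \<Rightarrow> nat \<Rightarrow> ('m::monoid_mult \<Rightarrow> 'k::field))
    \<Rightarrow> (nat \<Rightarrow> nat \<Rightarrow> ('m \<Rightarrow> 'k)) \<Rightarrow> (nat \<Rightarrow> nat \<Rightarrow> ('m \<Rightarrow> 'k))" where
  "ma_mat_mult d X Y = (\<lambda>i j m. \<Sum>l<d. ma_mult (X i l) (Y l j) m)"

definition ma_mat_one :: "nat \<Rightarrow> nat \<Rightarrow> ('m::monoid_mult \<Rightarrow> 'k::field)" where
  "ma_mat_one = (\<lambda>i j. if i = j then ma_one else (\<lambda>_. 0))"

definition ma_mat_eq :: "nat \<Rightarrow> (nat \<Rightarrow> nat \<Rightarrow> 'a) \<Rightarrow> (nat \<Rightarrow> nat \<Rightarrow> 'a) \<Rightarrow> bool" where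
  "ma_mat_eq d X Y \<longleftrightarrow> (\<forall>i<d. \<forall>j<d. X i j = Y i j)"

definition monoid_algebra_stably_finite :: "'m::monoid_mult itself \<Rightarrow> 'k::field itself \<Rightarrow> bool" where
  "monoid_algebra_stably_finite _ _ \<longleftrightarrow>
    (\<forall>d::nat. d \<ge> 1 \<longrightarrow>
      (\<forall>X Y :: nat \<Rightarrow> nat \<Rightarrow> ('m \<Rightarrow> 'k).
        ma_matrix d X \<longrightarrow> ma_matrix d Y \<longrightarrow>
        ma_mat_eq d (ma_mat_mult d X Y) ma_mat_one \<longrightarrow>
        ma_mat_eq d (ma_mat_mult d Y X) ma_mat_one))"

end

theory Submission
  imports Defs "HOL-Library.Function_Algebras" "HOL.Vector_Spaces"
begin

definition sc :: "'k::field \<Rightarrow> ('i \<Rightarrow> 'k) \<Rightarrow> ('i \<Rightarrow> 'k)" where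
  "sc c x = (\<lambda>p. c * x p)"

lemma sc_apply[simp]: "sc c x p = c * x p" by (simp add: sc_def)

interpretation fv: vector_space "sc :: 'k::field \<Rightarrow> ('i \<Rightarrow> 'k) \<Rightarrow> ('i \<Rightarrow> 'k)"
  by unfold_locales (auto simp: sc_def fun_eq_iff algebra_simps)

lemma sum_fun_apply: "(\<Sum>i\<in>A. f i) x = (\<Sum>i\<in>A. f i x)"
  by (induction A rule: infinite_finite_induct) auto

definition ev :: "'i \<Rightarrow> 'i \<Rightarrow> 'k::field" where
  "ev p = (\<lambda>q. if q = p then 1 else 0)"

definition supp_on :: "'i set \<Rightarrow> ('i \<Rightarrow> 'k::zero) set" where
  "supp_on P = {x. \<forall>q. q \<notin> P \<longrightarrow> x q = 0}"

lemma supp_on_span: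
  assumes "finite P" "x \<in> supp_on P"
  shows "x \<in> fv.span (ev ` P :: ('i \<Rightarrow> 'k::field) set)"
proof -
  have "x = (\<Sum>p\<in>P. sc (x p) (ev p))"
    using assms by (auto simp: fun_eq_iff sum_fun_apply ev_def supp_on_def if_distrib cong: if_cong)
  also have "\<dots> \<in> fv.span (ev ` P)"
    by (intro fv.span_sum fv.span_scale fv.span_base) auto
  finally show ?thesis .
qed

lemma indep_ev:
  assumes "finite P" "c \<noteq> 0"
  shows "fv.independent ((\<lambda>p. sc c (ev p)) ` P :: ('i \<Rightarrow> 'k::field) set)"
proof (rule fv.independent_if_scalars_zero)
  show "finite ((\<lambda>p. sc c (ev p)) ` P)" using assms by auto
next
  fix f x assume h: "(\<Sum>x\<in>(\<lambda>p. sc c (ev p)) ` P. sc (f x) x) = (0::'i\<Rightarrow>'k)" and x: "x \<in> (\<lambda>p. sc c (ev p)) ` P"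
  have inj: "inj_on (\<lambda>p. sc c (ev p) :: 'i \<Rightarrow> 'k) P"
    using assms by (auto simp: inj_on_def fun_eq_iff ev_def split: if_splits)
  from x obtain p where p: "p \<in> P" "x = sc c (ev p)" by auto
  have "(\<Sum>q\<in>P. sc (f (sc c (ev q))) (sc c (ev q))) = (0::'i\<Rightarrow>'k)"
    using h by (simp add: sum.reindex[OF inj])
  then have "(\<Sum>q\<in>P. sc (f (sc c (ev q))) (sc c (ev q))) p = 0" by simp
  then have "(\<Sum>q\<in>P. f (sc c (ev q)) * (c * (if p = q then 1 else 0))) = 0"
    by (simp add: sum_fun_apply ev_def mult.assoc)
  then have "f (sc c (ev p)) * c = 0"
    using p assms by (simp add: if_distrib cong: if_cong)
  then show "f x = 0" using p assms by simp
qed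

definition lin :: "(('i \<Rightarrow> 'k::field) \<Rightarrow> ('j \<Rightarrow> 'k)) \<Rightarrow> bool" where
  "lin f \<longleftrightarrow> (\<forall>x y. f (x + y) = f x + f y) \<and> (\<forall>c x. f (sc c x) = sc c (f x))"

lemma module_sc: "module (sc :: 'k::field \<Rightarrow> ('i \<Rightarrow> 'k) \<Rightarrow> ('i \<Rightarrow> 'k))"
  by unfold_locales (auto simp: sc_def fun_eq_iff algebra_simps)

lemma lin_spans:
  assumes "lin f" "V \<subseteq> fv.span B"
  shows "f ` V \<subseteq> fv.span (f ` B)"
proof -
  have "module_hom sc sc f"
    using assms(1) module_sc module_sc by (simp add: module_hom_iff lin_def)
  then show ?thesis using module_hom.spans_image[of sc sc f V B] assms(2) by blast
qed

lemma lin_span_mem: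
  assumes "lin f" "x \<in> fv.span B"
  shows "f x \<in> fv.span (f ` B)"
  using lin_spans[OF assms(1), of "{x}" B] assms(2) by auto

lemma in_supp_span:
  assumes "finite N" "U \<subseteq> supp_on N"
  shows "U \<subseteq> fv.span (ev ` N :: ('i \<Rightarrow> 'k::field) set)"
  using supp_on_span assms by blast

lemma indep_finite:
  assumes "finite N" "B \<subseteq> supp_on N" "fv.independent (B :: ('i \<Rightarrow> 'k::field) set)"
  shows "finite B" "card B \<le> card N"
proof -
  have "B \<subseteq> fv.span (ev ` N :: ('i \<Rightarrow> 'k) set)" using in_supp_span[OF assms(1,2)] .
  then have "finite B \<and> card B \<le> card (ev ` N :: ('i \<Rightarrow> 'k) set)"
    using fv.independent_span_bound[of "ev ` N" B] assms by auto
  then show "finite B" "card B \<le> card N" using card_image_le[OF assms(1), of "ev :: 'i \<Rightarrow> 'i \<Rightarrow> 'k"] by auto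
qed

lemma dim_ge_indep:
  assumes "finite N" "U \<subseteq> supp_on N" "B \<subseteq> U" "fv.independent (B :: ('i \<Rightarrow> 'k::field) set)"
  shows "card B \<le> fv.dim U"
proof -
  obtain C where C: "C \<subseteq> U" "fv.independent C" "U \<subseteq> fv.span C" "card C = fv.dim U"
    using fv.basis_exists[of U] by blast
  have "finite C" using indep_finite[of N C] C assms by auto
  then show ?thesis
    using fv.independent_span_bound[of C B] C assms by auto
qed

lemma dim_image_le':
  assumes "finite N" "U \<subseteq> supp_on N" "lin (f :: ('i \<Rightarrow> 'k::field) \<Rightarrow> ('j \<Rightarrow> 'k))"
  shows "fv.dim (f ` U) \<le> fv.dim U"
proof -
  obtain C where C: "C \<subseteq> U" "fv.independent C" "U \<subseteq> fv.span C" "card C = fv.dim U"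
    using fv.basis_exists[of U] by blast
  have "finite C" using indep_finite[of N C] C assms by auto
  have "f ` U \<subseteq> fv.span (f ` C)" using lin_spans[OF assms(3) C(3)] .
  then have "fv.dim (f ` U) \<le> card (f ` C)"
    using fv.dim_le_card \<open>finite C\<close> by blast
  also have "\<dots> \<le> card C" using card_image_le[OF \<open>finite C\<close>] .
  finally show ?thesis using C by simp
qed

lemma lin_diff: "lin f \<Longrightarrow> f (x - y) = f x - f y"
proof -
  assume "lin f"
  then have "f (x - y) + f y = f x" unfolding lin_def by (metis diff_add_cancel)
  then show ?thesis by (metis add_diff_cancel)
qed

lemma sc_one[simp]: "sc 1 x = x" by (simp add: sc_def)

lemma ev_in_supp: "p \<in> P \<Longrightarrow> ev p \<in> supp_on P"
  by (auto simp: ev_def supp_on_def)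

lemma supp_on_mono: "P \<subseteq> Q \<Longrightarrow> supp_on P \<subseteq> supp_on Q"
  by (auto simp: supp_on_def)

lemma core_upper:
  fixes A B \<Phi> :: "('i \<Rightarrow> 'k::field) \<Rightarrow> ('i \<Rightarrow> 'k)"
  assumes N: "finite N" and RN: "R \<subseteq> N"
    and lA: "lin A" and lB: "lin B" and lP: "lin \<Phi>"
    and AV: "A ` supp_on N \<subseteq> supp_on N" and BV: "B ` supp_on N \<subseteq> supp_on N"
    and h1: "\<And>y. y \<in> supp_on N \<Longrightarrow> B (A y) - y \<in> supp_on R"
    and h2: "\<And>z. z \<in> supp_on N \<Longrightarrow> \<Phi> z - (A (B z) - z) \<in> supp_on R"
  shows "fv.dim (\<Phi> ` supp_on N) \<le> 3 * card R"
proof -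
  let ?V = "supp_on N :: ('i \<Rightarrow> 'k) set"
  have R: "finite R" using N RN finite_subset by blast
  define \<pi> :: "('i \<Rightarrow> 'k) \<Rightarrow> ('i \<Rightarrow> 'k)" where "\<pi> x = (\<lambda>p. if p \<in> N - R then x p else 0)" for x
  have l\<pi>: "lin \<pi>" by (auto simp: lin_def \<pi>_def fun_eq_iff)
  have sub1: "ev ` (N - R) \<subseteq> \<pi> ` (B ` (A ` ?V))"
  proof
    fix e assume "e \<in> (ev ` (N - R) :: ('i \<Rightarrow> 'k) set)"
    then obtain p where p: "p \<in> N - R" "e = ev p" by auto
    have y: "ev p \<in> ?V" using p ev_in_supp[of p N] by auto
    have "\<pi> (B (A (ev p))) = e"
    proof
      fix q
      have "(B (A (ev p)) - ev p) q = 0" if "q \<notin> R"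
        using h1[OF y] that by (auto simp: supp_on_def)
      then show "\<pi> (B (A (ev p))) q = e q"
        using p by (auto simp: \<pi>_def ev_def)
    qed
    then show "e \<in> \<pi> ` (B ` (A ` ?V))" using y by blast
  qed
  have indR: "fv.independent (ev ` (N - R) :: ('i \<Rightarrow> 'k) set)"
    using indep_ev[of "N - R" 1] N by simp
  have injev: "inj (ev :: 'i \<Rightarrow> 'i \<Rightarrow> 'k)"
    by (auto simp: inj_def ev_def fun_eq_iff split: if_splits)
  have BAV: "B ` (A ` ?V) \<subseteq> ?V" using AV BV by blast
  have piV: "\<pi> ` (B ` (A ` ?V)) \<subseteq> ?V" by (auto simp: \<pi>_def supp_on_def)
  have "card (N - R) = card (ev ` (N - R) :: ('i \<Rightarrow> 'k) set)"
    using card_image[of "ev :: 'i \<Rightarrow> 'i \<Rightarrow> 'k" "N - R"] injev by (simp add: inj_on_subset)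
  also have "\<dots> \<le> fv.dim (\<pi> ` (B ` (A ` ?V)))"
    using dim_ge_indep[OF N piV sub1 indR] .
  also have "\<dots> \<le> fv.dim (B ` (A ` ?V))" using dim_image_le'[OF N BAV l\<pi>] .
  also have "\<dots> \<le> fv.dim (A ` ?V)" using dim_image_le'[OF N AV lB] .
  finally have dimA: "card N - card R \<le> fv.dim (A ` ?V)"
    using card_Diff_subset[OF R RN] by simp
  obtain C where C: "C \<subseteq> A ` ?V" "fv.independent C" "A ` ?V \<subseteq> fv.span C" "card C = fv.dim (A ` ?V)"
    using fv.basis_exists[of "A ` ?V"] by blast
  obtain C' where C': "C \<subseteq> C'" "C' \<subseteq> ?V" "fv.independent C'" "?V \<subseteq> fv.span C'"
  proof -
    have "C \<subseteq> ?V" using C(1) AV by blast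
    from fv.maximal_independent_subset_extend[OF this C(2)] that show ?thesis by blast
  qed
  have fC': "finite C'" "card C' \<le> card N" using indep_finite[OF N C'(2) C'(3)] by auto
  have cardD: "card (C' - C) \<le> card R"
  proof -
    have "finite C" using finite_subset[OF C'(1) fC'(1)] .
    then have "card (C' - C) = card C' - card C" using card_Diff_subset[of C C'] C'(1) by simp
    then show ?thesis using fC'(2) C(4) dimA by linarith
  qed
  define U3 where "U3 = ev ` R \<union> A ` ev ` R \<union> \<Phi> ` (C' - C)"
  have PC': "\<Phi> ` C' \<subseteq> fv.span U3"
  proof
    fix z assume "z \<in> \<Phi> ` C'"
    then obtain c where c: "c \<in> C'" "z = \<Phi> c" by auto
    show "z \<in> fv.span U3"
    proof (cases "c \<in> C")
      case False
      then show ?thesis using c by (auto simp: U3_def intro: fv.span_base)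
    next
      case True
      then obtain y where y: "y \<in> ?V" "c = A y" using C by auto
      have cV: "c \<in> ?V" using y AV by auto
      have e1: "\<Phi> c - (A (B c) - c) \<in> fv.span U3"
        using supp_on_span[OF R h2[OF cV]] fv.span_mono[of "ev ` R" U3] by (auto simp: U3_def)
      have "B (A y) - y \<in> fv.span (ev ` R)" using supp_on_span[OF R h1[OF y(1)]] .
      then have "A (B (A y) - y) \<in> fv.span (A ` ev ` R)" using lin_span_mem[OF lA] by blast
      then have e2: "A (B (A y) - y) \<in> fv.span U3" using fv.span_mono[of "A ` ev ` R" U3] by (auto simp: U3_def)
      have "z = (\<Phi> c - (A (B c) - c)) + A (B (A y) - y)"
        using c y lin_diff[OF lA] by simp
      then show ?thesis using e1 e2 fv.span_add by simp
    qed
  qed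
  have "\<Phi> ` ?V \<subseteq> fv.span (\<Phi> ` C')" using lin_spans[OF lP C'(4)] .
  also have "\<dots> \<subseteq> fv.span U3" by (rule fv.span_minimal[OF PC']) simp
  finally have "\<Phi> ` ?V \<subseteq> fv.span U3" .
  moreover have fU3: "finite U3" using R fC' by (auto simp: U3_def)
  ultimately have "fv.dim (\<Phi> ` ?V) \<le> card U3" using fv.dim_le_card by blast
  also have "card U3 \<le> card (ev ` R :: ('i \<Rightarrow> 'k) set) + card (A ` ev ` R) + card (\<Phi> ` (C' - C))"
  proof -
    have "card U3 \<le> card (ev ` R \<union> A ` ev ` R) + card (\<Phi> ` (C' - C))"
      unfolding U3_def by (rule card_Un_le)
    moreover have "card (ev ` R \<union> A ` ev ` R) \<le> card (ev ` R :: ('i \<Rightarrow> 'k) set) + card (A ` ev ` R)"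
      by (rule card_Un_le)
    ultimately show ?thesis by linarith
  qed
  also have "\<dots> \<le> card R + card R + card R"
    using card_image_le[OF R, of "ev :: 'i \<Rightarrow> 'i \<Rightarrow> 'k"] card_image_le[of "ev ` R :: ('i \<Rightarrow> 'k) set" A]
      card_image_le[of "C' - C" \<Phi>] cardD R fC' by fastforce
  finally show ?thesis by simp
qed


definition Tm :: "nat \<Rightarrow> nat set \<Rightarrow> ('m::monoid_mult \<Rightarrow> nat \<Rightarrow> nat) \<Rightarrow> (nat \<Rightarrow> nat \<Rightarrow> ('m \<Rightarrow> 'k::field))
   \<Rightarrow> (nat \<times> nat \<Rightarrow> 'k) \<Rightarrow> (nat \<times> nat \<Rightarrow> 'k)" where
  "Tm d D \<sigma> X x = (\<lambda>(i,v). if i < d \<and> v \<in> D then (\<Sum>j<d. \<Sum>k\<in>{k. X j i k \<noteq> 0}. X j i k * x (j, \<sigma> k v)) else 0)"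

lemma Tm_lin: "lin (Tm d D \<sigma> X)"
  by (auto simp: lin_def Tm_def fun_eq_iff algebra_simps sum.distrib sum_distrib_left)

lemma Tm_out: "\<not> (i < d \<and> v \<in> D) \<Longrightarrow> Tm d D \<sigma> X x (i, v) = 0"
  by (auto simp: Tm_def)

lemma Tm_supp: "Tm d D \<sigma> X ` supp_on N \<subseteq> supp_on ({..<d} \<times> D)"
proof
  fix y assume "y \<in> Tm d D \<sigma> X ` supp_on N"
  then obtain x where y: "y = Tm d D \<sigma> X x" by auto
  show "y \<in> supp_on ({..<d} \<times> D)"
    unfolding supp_on_def
  proof (intro CollectI allI impI)
    fix q :: "nat \<times> nat" assume "q \<notin> {..<d} \<times> D"
    then show "y q = 0" using y by (cases q) (auto simp: Tm_def)
  qed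
qed


lemma Tm_F:
  assumes "finite F" "\<And>j. j < d \<Longrightarrow> {k. X j i k \<noteq> 0} \<subseteq> F" "i < d" "v \<in> D"
  shows "Tm d D \<sigma> X x (i, v) = (\<Sum>j<d. \<Sum>k\<in>F. X j i k * x (j, \<sigma> k v))"
proof -
  have "(\<Sum>k\<in>{k. X j i k \<noteq> 0}. X j i k * x (j, \<sigma> k v)) = (\<Sum>k\<in>F. X j i k * x (j, \<sigma> k v))" if "j < d" for j
    using assms(1) assms(2)[OF that] by (intro sum.mono_neutral_left) auto
  then show ?thesis using assms(3,4) by (simp add: Tm_def)
qed

lemma Tm_cong: "ma_mat_eq d P Q \<Longrightarrow> Tm d D \<sigma> P = Tm d D \<sigma> Q"
  by (auto simp: Tm_def ma_mat_eq_def fun_eq_iff intro!: sum.cong)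

lemma ma_mult_G:
  fixes f g :: "'m::monoid_mult \<Rightarrow> 'k::field"
  assumes G: "finite G" "{a. f a \<noteq> 0} \<subseteq> G" "{b. g b \<noteq> 0} \<subseteq> G"
  shows "ma_mult f g m = (\<Sum>a\<in>G. \<Sum>b\<in>G. if a * b = m then f a * g b else 0)"
proof -
  let ?P = "{p. fst p * snd p = m \<and> f (fst p) \<noteq> 0 \<and> g (snd p) \<noteq> 0}"
  have sub: "?P \<subseteq> G \<times> G" using G by auto
  have "ma_mult f g m = (\<Sum>p\<in>?P. f (fst p) * g (snd p))" by (simp add: ma_mult_def)
  also have "\<dots> = (\<Sum>p\<in>G \<times> G. if fst p * snd p = m then f (fst p) * g (snd p) else 0)"
    using sub G(1) by (intro sum.mono_neutral_cong_left) auto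
  also have "\<dots> = (\<Sum>a\<in>G. \<Sum>b\<in>G. if a * b = m then f a * g b else 0)"
    by (simp add: sum.cartesian_product split_def)
  finally show ?thesis .
qed

lemma if_mult_zero: "(if P then a else 0) * (x::'a::mult_zero) = (if P then a * x else 0)"
  by simp

lemma mat_mult_G:
  fixes P Q :: "nat \<Rightarrow> nat \<Rightarrow> 'm::monoid_mult \<Rightarrow> 'k::field"
  assumes G: "finite G" and PG: "\<And>l j. l < d \<Longrightarrow> j < d \<Longrightarrow> {a. P l j a \<noteq> 0} \<subseteq> G"
    and QG: "\<And>l j. l < d \<Longrightarrow> j < d \<Longrightarrow> {a. Q l j a \<noteq> 0} \<subseteq> G"
    and l: "l < d" and i: "i < d"
  shows "ma_mat_mult d P Q l i m = (\<Sum>j<d. \<Sum>a\<in>G. \<Sum>b\<in>G. if a * b = m then P l j a * Q j i b else 0)"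
  unfolding ma_mat_mult_def using ma_mult_G[OF G PG QG] l i by simp

lemma mat_mult_supp:
  fixes P Q :: "nat \<Rightarrow> nat \<Rightarrow> 'm::monoid_mult \<Rightarrow> 'k::field"
  assumes G: "finite G" and PG: "\<And>l j. l < d \<Longrightarrow> j < d \<Longrightarrow> {a. P l j a \<noteq> 0} \<subseteq> G"
    and QG: "\<And>l j. l < d \<Longrightarrow> j < d \<Longrightarrow> {a. Q l j a \<noteq> 0} \<subseteq> G"
    and l: "l < d" and i: "i < d"
  shows "{m. ma_mat_mult d P Q l i m \<noteq> 0} \<subseteq> (\<lambda>(a, b). a * b) ` (G \<times> G)"
proof
  fix m assume "m \<in> {m. ma_mat_mult d P Q l i m \<noteq> 0}"
  then have "(\<Sum>j<d. \<Sum>a\<in>G. \<Sum>b\<in>G. if a * b = m then P l j a * Q j i b else 0) \<noteq> 0"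
    using mat_mult_G[where P=P and Q=Q and d=d and G=G, OF G PG QG l i] by simp
  then obtain j where "(\<Sum>a\<in>G. \<Sum>b\<in>G. if a * b = m then P l j a * Q j i b else 0) \<noteq> 0"
    using sum.not_neutral_contains_not_neutral by blast
  then obtain a where a: "a \<in> G" "(\<Sum>b\<in>G. if a * b = m then P l j a * Q j i b else 0) \<noteq> 0"
    using sum.not_neutral_contains_not_neutral by blast
  then obtain b where "b \<in> G" "(if a * b = m then P l j a * Q j i b else 0) \<noteq> 0"
    using sum.not_neutral_contains_not_neutral by blast
  then have "a \<in> G" "b \<in> G" "a * b = m" using a by (auto split: if_splits)
  then show "m \<in> (\<lambda>(a, b). a * b) ` (G \<times> G)" by force
qed

lemma Tm_mult:
  fixes P Q :: "nat \<Rightarrow> nat \<Rightarrow> 'm::monoid_mult \<Rightarrow> 'k::field"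
  assumes G: "finite G" and PG: "\<And>l j. l < d \<Longrightarrow> j < d \<Longrightarrow> {a. P l j a \<noteq> 0} \<subseteq> G"
    and QG: "\<And>l j. l < d \<Longrightarrow> j < d \<Longrightarrow> {a. Q l j a \<noteq> 0} \<subseteq> G"
    and i: "i < d" and v: "v \<in> D" and \<sigma>D: "\<And>k. \<sigma> k ` D \<subseteq> D"
    and good: "\<And>a b. a \<in> G \<Longrightarrow> b \<in> G \<Longrightarrow> \<sigma> (a * b) v = \<sigma> a (\<sigma> b v)"
  shows "Tm d D \<sigma> (ma_mat_mult d P Q) x (i, v) = Tm d D \<sigma> Q (Tm d D \<sigma> P x) (i, v)"
proof -
  define GG where "GG = (\<lambda>(a, b). a * b) ` (G \<times> G)"
  have fGG: "finite GG" using G by (simp add: GG_def)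
  have abGG: "a * b \<in> GG" if "a \<in> G" "b \<in> G" for a b using that by (force simp: GG_def)
  have L: "Tm d D \<sigma> (ma_mat_mult d P Q) x (i, v) = (\<Sum>l<d. \<Sum>m\<in>GG. ma_mat_mult d P Q l i m * x (l, \<sigma> m v))"
  proof (rule Tm_F[OF fGG _ i v])
    fix l assume "l < d"
    show "{m. ma_mat_mult d P Q l i m \<noteq> 0} \<subseteq> GG"
      unfolding GG_def by (rule mat_mult_supp[where P=P and Q=Q and d=d and G=G, OF G PG QG \<open>l < d\<close> i])
  qed
  have L2: "(\<Sum>m\<in>GG. ma_mat_mult d P Q l i m * x (l, \<sigma> m v))
      = (\<Sum>j<d. \<Sum>a\<in>G. \<Sum>b\<in>G. P l j a * Q j i b * x (l, \<sigma> a (\<sigma> b v)))" if l: "l < d" for l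
  proof -
    have "(\<Sum>m\<in>GG. ma_mat_mult d P Q l i m * x (l, \<sigma> m v))
        = (\<Sum>m\<in>GG. \<Sum>j<d. \<Sum>a\<in>G. \<Sum>b\<in>G. if a * b = m then P l j a * Q j i b * x (l, \<sigma> m v) else 0)"
      using mat_mult_G[where P=P and Q=Q and d=d and G=G, OF G PG QG l i] by (simp add: sum_distrib_right if_mult_zero)
    also have "\<dots> = (\<Sum>j<d. \<Sum>m\<in>GG. \<Sum>a\<in>G. \<Sum>b\<in>G. if a * b = m then P l j a * Q j i b * x (l, \<sigma> m v) else 0)"
      by (rule sum.swap)
    also have "\<dots> = (\<Sum>j<d. \<Sum>a\<in>G. \<Sum>m\<in>GG. \<Sum>b\<in>G. if a * b = m then P l j a * Q j i b * x (l, \<sigma> m v) else 0)"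
      by (rule sum.cong[OF refl], rule sum.swap)
    also have "\<dots> = (\<Sum>j<d. \<Sum>a\<in>G. \<Sum>b\<in>G. \<Sum>m\<in>GG. if a * b = m then P l j a * Q j i b * x (l, \<sigma> m v) else 0)"
      by (rule sum.cong[OF refl], rule sum.cong[OF refl], rule sum.swap)
    also have "\<dots> = (\<Sum>j<d. \<Sum>a\<in>G. \<Sum>b\<in>G. P l j a * Q j i b * x (l, \<sigma> (a * b) v))"
      using fGG abGG by (intro sum.cong refl) (simp add: sum.delta)
    also have "\<dots> = (\<Sum>j<d. \<Sum>a\<in>G. \<Sum>b\<in>G. P l j a * Q j i b * x (l, \<sigma> a (\<sigma> b v)))"
      using good by (intro sum.cong refl) simp
    finally show ?thesis .
  qed
  have R: "Tm d D \<sigma> Q (Tm d D \<sigma> P x) (i, v) = (\<Sum>j<d. \<Sum>b\<in>G. Q j i b * Tm d D \<sigma> P x (j, \<sigma> b v))"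
    by (rule Tm_F[OF G _ i v]) (use QG i in auto)
  also have "\<dots> = (\<Sum>j<d. \<Sum>b\<in>G. Q j i b * (\<Sum>l<d. \<Sum>a\<in>G. P l j a * x (l, \<sigma> a (\<sigma> b v))))"
  proof (intro sum.cong refl)
    fix j b assume "j \<in> {..<d}" "b \<in> G"
    then show "Q j i b * Tm d D \<sigma> P x (j, \<sigma> b v) = Q j i b * (\<Sum>l<d. \<Sum>a\<in>G. P l j a * x (l, \<sigma> a (\<sigma> b v)))"
    proof -
      have "\<sigma> b v \<in> D" using \<sigma>D v by auto
      have "Tm d D \<sigma> P x (j, \<sigma> b v) = (\<Sum>l<d. \<Sum>a\<in>G. P l j a * x (l, \<sigma> a (\<sigma> b v)))"
        by (rule Tm_F[OF G _ _ \<open>\<sigma> b v \<in> D\<close>]) (use PG \<open>j \<in> {..<d}\<close> in auto)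
      then show ?thesis by simp
    qed
  qed
  also have "\<dots> = (\<Sum>j<d. \<Sum>b\<in>G. \<Sum>l<d. \<Sum>a\<in>G. P l j a * Q j i b * x (l, \<sigma> a (\<sigma> b v)))"
    unfolding sum_distrib_left by (intro sum.cong refl) (simp add: mult_ac)
  also have "\<dots> = (\<Sum>j<d. \<Sum>l<d. \<Sum>b\<in>G. \<Sum>a\<in>G. P l j a * Q j i b * x (l, \<sigma> a (\<sigma> b v)))"
    by (rule sum.cong[OF refl], rule sum.swap)
  also have "\<dots> = (\<Sum>j<d. \<Sum>l<d. \<Sum>a\<in>G. \<Sum>b\<in>G. P l j a * Q j i b * x (l, \<sigma> a (\<sigma> b v)))"
    by (rule sum.cong[OF refl], rule sum.cong[OF refl], rule sum.swap)
  also have "\<dots> = (\<Sum>l<d. \<Sum>j<d. \<Sum>a\<in>G. \<Sum>b\<in>G. P l j a * Q j i b * x (l, \<sigma> a (\<sigma> b v)))"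
    by (rule sum.swap)
  also have "\<dots> = Tm d D \<sigma> (ma_mat_mult d P Q) x (i, v)"
    using L L2 by simp
  finally show ?thesis by simp
qed

lemma Tm_one:
  assumes "i < d" "v \<in> D" "\<sigma> 1 v = v"
  shows "Tm d D \<sigma> (ma_mat_one :: nat \<Rightarrow> nat \<Rightarrow> 'm::monoid_mult \<Rightarrow> 'k::field) x (i, v) = x (i, v)"
proof -
  have "Tm d D \<sigma> (ma_mat_one :: nat \<Rightarrow> nat \<Rightarrow> 'm \<Rightarrow> 'k) x (i, v)
      = (\<Sum>j<d. \<Sum>k\<in>{1}. (ma_mat_one :: nat \<Rightarrow> nat \<Rightarrow> 'm \<Rightarrow> 'k) j i k * x (j, \<sigma> k v))"
    by (rule Tm_F) (use assms in \<open>auto simp: ma_mat_one_def ma_one_def\<close>)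
  also have "\<dots> = (\<Sum>j<d. if j = i then x (i, v) else 0)"
    using assms by (intro sum.cong refl) (auto simp: ma_mat_one_def ma_one_def)
  also have "\<dots> = x (i, v)" using assms by (simp add: sum.delta')
  finally show ?thesis .
qed


lemma greedy:
  fixes U :: "'a set" and conf :: "'a \<Rightarrow> 'a \<Rightarrow> bool"
  assumes "finite U" "\<And>v. v \<in> U \<Longrightarrow> card {w\<in>U. conf v w \<or> conf w v} \<le> \<delta>"
  shows "\<exists>W \<subseteq> U. (\<forall>v\<in>W. \<forall>w\<in>W. v \<noteq> w \<longrightarrow> \<not> conf v w) \<and> card U \<le> (\<delta> + 1) * card W"
  using assms
proof (induction "card U" arbitrary: U rule: less_induct)
  case less
  show ?case
  proof (cases "U = {}")
    case True then show ?thesis by auto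
  next
    case False
    then obtain v where v: "v \<in> U" by auto
    define Nv where "Nv = {w\<in>U. conf v w \<or> conf w v}"
    define U' where "U' = U - insert v Nv"
    have fU': "finite U'" using less.prems by (simp add: U'_def)
    have "card U' < card U"
      unfolding U'_def using v less.prems(1) by (intro psubset_card_mono) auto
    moreover have "card {w\<in>U'. conf u w \<or> conf w u} \<le> \<delta>" if "u \<in> U'" for u
    proof -
      have "card {w\<in>U'. conf u w \<or> conf w u} \<le> card {w\<in>U. conf u w \<or> conf w u}"
        using less.prems(1) by (intro card_mono) (auto simp: U'_def)
      also have "\<dots> \<le> \<delta>" using less.prems(2) that by (auto simp: U'_def)
      finally show ?thesis .
    qed
    ultimately obtain W' where W': "W' \<subseteq> U'" "\<forall>v\<in>W'. \<forall>w\<in>W'. v \<noteq> w \<longrightarrow> \<not> conf v w"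
      "card U' \<le> (\<delta> + 1) * card W'"
      using less.hyps[of U'] fU' by blast
    define W where "W = insert v W'"
    have vW': "v \<notin> W'" using W'(1) by (auto simp: U'_def)
    have fW': "finite W'" using W'(1) fU' finite_subset by blast
    have "W \<subseteq> U" using W'(1) v by (auto simp: W_def U'_def)
    moreover have "\<forall>x\<in>W. \<forall>y\<in>W. x \<noteq> y \<longrightarrow> \<not> conf x y"
      using W'(1,2) by (auto simp: W_def U'_def Nv_def)
    moreover have "card U \<le> (\<delta> + 1) * card W"
    proof -
      have "U \<subseteq> insert v Nv \<union> U'" by (auto simp: U'_def)
      moreover have "finite (insert v Nv \<union> U')" using fU' less.prems(1) by (simp add: Nv_def)
      ultimately have "card U \<le> card (insert v Nv \<union> U')" by (rule card_mono[rotated])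
      also have "\<dots> \<le> card (insert v Nv) + card U'" by (rule card_Un_le)
      finally have "card U \<le> card (insert v Nv) + card U'" .
      also have "card (insert v Nv) \<le> Suc (card Nv)" using less.prems(1) by (simp add: card_insert_if Nv_def)
      also have "card Nv \<le> \<delta>" using less.prems(2)[OF v] by (simp add: Nv_def)
      finally have "card U \<le> Suc \<delta> + card U'" by simp
      also have "\<dots> \<le> (\<delta> + 1) * (card W' + 1)" using W'(3) by simp
      also have "card W' + 1 = card W" using vW' fW' by (simp add: W_def)
      finally show ?thesis .
    qed
    ultimately show ?thesis by blast
  qed
qed

lemma ham_le:
  assumes "finite D" "D \<noteq> {}" "ham_dist D f g \<le> \<epsilon>"
  shows "real (card {v\<in>D. f v \<noteq> g v}) \<le> \<epsilon> * real (card D)"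
proof -
  have "real (card D) > 0" using assms by (simp add: card_gt_0_iff)
  then show ?thesis using assms(3) by (simp add: ham_dist_def divide_le_eq)
qed

lemma ham_ge:
  assumes "finite D" "D \<noteq> {}" "ham_dist D f g \<ge> 1 - \<epsilon>"
  shows "real (card {v\<in>D. f v = g v}) \<le> \<epsilon> * real (card D)"
proof -
  have pos: "real (card D) > 0" using assms by (simp add: card_gt_0_iff)
  have "(1 - \<epsilon>) * real (card D) \<le> real (card {v\<in>D. f v \<noteq> g v})"
    using assms(3) pos by (simp add: ham_dist_def le_divide_eq)
  moreover have "card {v\<in>D. f v = g v} + card {v\<in>D. f v \<noteq> g v} = card D"
  proof -
    have "{v\<in>D. f v = g v} \<union> {v\<in>D. f v \<noteq> g v} = D" by auto
    moreover have "{v\<in>D. f v = g v} \<inter> {v\<in>D. f v \<noteq> g v} = {}" by auto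
    ultimately show ?thesis using assms(1) card_Un_disjoint[of "{v\<in>D. f v = g v}" "{v\<in>D. f v \<noteq> g v}"]
      by simp
  qed
  then have "real (card {v\<in>D. f v = g v}) + real (card {v\<in>D. f v \<noteq> g v}) = real (card D)"
    by (metis of_nat_add)
  ultimately show ?thesis by (simp add: left_diff_distrib)
qed


lemma lin_minus_id: "lin T \<Longrightarrow> lin (\<lambda>x. T x - x)"
  by (auto simp: lin_def fun_eq_iff algebra_simps sc_def)

lemma inj_sc_ev: "c \<noteq> 0 \<Longrightarrow> inj (\<lambda>p. sc c (ev p) :: 'i \<Rightarrow> 'k::field)"
  by (auto simp: inj_def fun_eq_iff ev_def split: if_splits)

lemma card_UN_real:
  assumes "finite I" "\<And>i. i \<in> I \<Longrightarrow> real (card (A i)) \<le> b"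
  shows "real (card (\<Union>i\<in>I. A i)) \<le> real (card I) * b"
proof -
  have "card (\<Union>i\<in>I. A i) \<le> (\<Sum>i\<in>I. card (A i))" using assms(1) by (rule card_UN_le)
  then have "real (card (\<Union>i\<in>I. A i)) \<le> (\<Sum>i\<in>I. real (card (A i)))" by (metis of_nat_le_iff of_nat_sum)
  also have "\<dots> \<le> (\<Sum>i\<in>I. b)" using assms(2) by (rule sum_mono)
  finally show ?thesis by simp
qed

theorem corollary1p3:
  assumes "strongly_sofic TYPE('m::monoid_mult)"
  shows "monoid_algebra_stably_finite TYPE('m) TYPE('k::field)"
  unfolding monoid_algebra_stably_finite_def
proof (intro allI impI)
  fix d :: nat and X Y :: "nat \<Rightarrow> nat \<Rightarrow> 'm \<Rightarrow> 'k"
  assume d1: "d \<ge> 1" and mX: "ma_matrix d X" and mY: "ma_matrix d Y"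
    and XY: "ma_mat_eq d (ma_mat_mult d X Y) ma_mat_one"
  show "ma_mat_eq d (ma_mat_mult d Y X) ma_mat_one"
  proof (rule ccontr)
    assume "\<not> ma_mat_eq d (ma_mat_mult d Y X) ma_mat_one"
    then obtain j0 i0 where ji0: "j0 < d" "i0 < d" "ma_mat_mult d Y X j0 i0 \<noteq> ma_mat_one j0 i0"
      unfolding ma_mat_eq_def by blast
    then obtain k0 where hk0: "ma_mat_mult d Y X j0 i0 k0 \<noteq> (ma_mat_one j0 i0 :: 'm \<Rightarrow> 'k) k0"
      by blast
    define G where "G = insert 1 (\<Union>i<d. \<Union>j<d. {k. X i j k \<noteq> 0} \<union> {k. Y i j k \<noteq> 0})"
    have fG: "finite G" using mX mY by (auto simp: G_def ma_matrix_def ma_elem_def)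
    have XG: "\<And>l j. l < d \<Longrightarrow> j < d \<Longrightarrow> {a. X l j a \<noteq> 0} \<subseteq> G" by (auto simp: G_def)
    have YG: "\<And>l j. l < d \<Longrightarrow> j < d \<Longrightarrow> {a. Y l j a \<noteq> 0} \<subseteq> G" by (auto simp: G_def)
    define F where "F = (\<lambda>(a, b). a * b) ` (G \<times> G)"
    have fF: "finite F" using fG by (simp add: F_def)
    have GF: "G \<subseteq> F"
    proof
      fix a assume "a \<in> G"
      moreover have "1 \<in> G" by (simp add: G_def)
      ultimately have "(a, 1) \<in> G \<times> G" by simp
      then show "a \<in> F" unfolding F_def by force
    qed
    have oneF: "1 \<in> F" using GF by (auto simp: G_def)
    have YXF: "\<And>l. l < d \<Longrightarrow> {m. ma_mat_mult d Y X l i0 m \<noteq> 0} \<subseteq> F"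
      unfolding F_def by (rule mat_mult_supp[OF fG YG XG _ ji0(2)])
    have k0F: "k0 \<in> F"
    proof (rule ccontr)
      assume "k0 \<notin> F"
      then have "ma_mat_mult d Y X j0 i0 k0 = 0" using YXF[OF ji0(1)] by blast
      moreover have "(ma_mat_one j0 i0 :: 'm \<Rightarrow> 'k) k0 = 0"
        using \<open>k0 \<notin> F\<close> oneF by (auto simp: ma_mat_one_def ma_one_def)
      ultimately show False using hk0 by simp
    qed
    have "\<exists>\<Delta>::nat. \<Delta> \<ge> 1 \<and>
        (\<forall>\<epsilon>::real. \<epsilon> > 0 \<longrightarrow>
          (\<exists>(D :: nat set) (\<sigma> :: 'm \<Rightarrow> nat \<Rightarrow> nat).
             finite D \<and> D \<noteq> {} \<and>
             (\<forall>k. \<sigma> k ` D \<subseteq> D) \<and>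
             (\<forall>v\<in>D. \<sigma> 1 v = v) \<and>
             (\<forall>k1\<in>F. \<forall>k2\<in>F. ham_dist D (\<sigma> (k1 * k2)) (\<sigma> k1 \<circ> \<sigma> k2) \<le> \<epsilon>) \<and>
             (\<forall>k1\<in>F. \<forall>k2\<in>F. k1 \<noteq> k2 \<longrightarrow> ham_dist D (\<sigma> k1) (\<sigma> k2) \<ge> 1 - \<epsilon>) \<and>
             (\<forall>k\<in>F. \<forall>v\<in>D. card {u \<in> D. \<sigma> k u = v} \<le> \<Delta>)))"
      using assms[unfolded strongly_sofic_def, rule_format, OF fF] .
    then obtain \<Delta> :: nat where \<Delta>: "\<Delta> \<ge> 1" and sof: "\<forall>\<epsilon>::real. \<epsilon> > 0 \<longrightarrow>
          (\<exists>(D :: nat set) (\<sigma> :: 'm \<Rightarrow> nat \<Rightarrow> nat).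
             finite D \<and> D \<noteq> {} \<and>
             (\<forall>k. \<sigma> k ` D \<subseteq> D) \<and>
             (\<forall>v\<in>D. \<sigma> 1 v = v) \<and>
             (\<forall>k1\<in>F. \<forall>k2\<in>F. ham_dist D (\<sigma> (k1 * k2)) (\<sigma> k1 \<circ> \<sigma> k2) \<le> \<epsilon>) \<and>
             (\<forall>k1\<in>F. \<forall>k2\<in>F. k1 \<noteq> k2 \<longrightarrow> ham_dist D (\<sigma> k1) (\<sigma> k2) \<ge> 1 - \<epsilon>) \<and>
             (\<forall>k\<in>F. \<forall>v\<in>D. card {u \<in> D. \<sigma> k u = v} \<le> \<Delta>))"
      by (elim exE conjE)
    define f where "f = card F"
    define Kc where "Kc = (2 * f * \<Delta> + 1) * 3 * d * f * f"
    define \<epsilon> :: real where "\<epsilon> = 1 / (2 * real f + 2 * real Kc + 1)"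
    have \<epsilon>pos: "\<epsilon> > 0" by (simp add: \<epsilon>_def add_pos_nonneg)
    from sof[rule_format, OF \<epsilon>pos] obtain D and \<sigma> :: "'m \<Rightarrow> nat \<Rightarrow> nat" where H:
             "finite D \<and> D \<noteq> {} \<and>
             (\<forall>k. \<sigma> k ` D \<subseteq> D) \<and>
             (\<forall>v\<in>D. \<sigma> 1 v = v) \<and>
             (\<forall>k1\<in>F. \<forall>k2\<in>F. ham_dist D (\<sigma> (k1 * k2)) (\<sigma> k1 \<circ> \<sigma> k2) \<le> \<epsilon>) \<and>
             (\<forall>k1\<in>F. \<forall>k2\<in>F. k1 \<noteq> k2 \<longrightarrow> ham_dist D (\<sigma> k1) (\<sigma> k2) \<ge> 1 - \<epsilon>) \<and>
             (\<forall>k\<in>F. \<forall>v\<in>D. card {u \<in> D. \<sigma> k u = v} \<le> \<Delta>)"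
      by (elim exE)
    have fD: "finite D" and Dne: "D \<noteq> {}" using H by auto
    have \<sigma>D: "\<And>k. \<sigma> k ` D \<subseteq> D" using H by auto
    have \<sigma>1: "\<And>v. v \<in> D \<Longrightarrow> \<sigma> 1 v = v" using H by auto
    have ham2: "\<And>k1 k2. k1 \<in> F \<Longrightarrow> k2 \<in> F \<Longrightarrow> ham_dist D (\<sigma> (k1 * k2)) (\<sigma> k1 \<circ> \<sigma> k2) \<le> \<epsilon>"
      using H by auto
    have ham3: "\<And>k1 k2. k1 \<in> F \<Longrightarrow> k2 \<in> F \<Longrightarrow> k1 \<noteq> k2 \<Longrightarrow> ham_dist D (\<sigma> k1) (\<sigma> k2) \<ge> 1 - \<epsilon>"
      using H by auto
    have pre4: "\<And>k v. k \<in> F \<Longrightarrow> v \<in> D \<Longrightarrow> card {u \<in> D. \<sigma> k u = v} \<le> \<Delta>"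
      using H by auto
    have Dpos: "real (card D) > 0" using fD Dne by (simp add: card_gt_0_iff)
    have \<epsilon>ge: "\<epsilon> \<ge> 0" using \<epsilon>pos by simp
    have cardG: "card G \<le> f" unfolding f_def by (rule card_mono[OF fF GF])
    define Bad where "Bad = {v\<in>D. \<exists>a\<in>G. \<exists>b\<in>G. \<sigma> (a * b) v \<noteq> \<sigma> a (\<sigma> b v)}"
    have BadU: "Bad = (\<Union>p\<in>G \<times> G. {v\<in>D. \<sigma> (fst p * snd p) v \<noteq> (\<sigma> (fst p) \<circ> \<sigma> (snd p)) v})"
      unfolding Bad_def by (auto; blast)
    have cardBad: "real (card Bad) \<le> real f * real f * \<epsilon> * real (card D)"
    proof -
      have "real (card Bad) \<le> real (card (G \<times> G)) * (\<epsilon> * real (card D))"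
        unfolding BadU
      proof (rule card_UN_real)
        show "finite (G \<times> G)" using fG by simp
      next
        fix p assume "p \<in> G \<times> G"
        then have "fst p \<in> F" "snd p \<in> F" using GF by auto
        then show "real (card {v\<in>D. \<sigma> (fst p * snd p) v \<noteq> (\<sigma> (fst p) \<circ> \<sigma> (snd p)) v}) \<le> \<epsilon> * real (card D)"
          using ham_le[OF fD Dne ham2] by blast
      qed
      also have "\<dots> \<le> real f * real f * (\<epsilon> * real (card D))"
      proof (rule mult_right_mono)
        have "card (G \<times> G) \<le> f * f" using cardG by (simp add: card_cartesian_product mult_le_mono)
        then show "real (card (G \<times> G)) \<le> real f * real f" by (metis of_nat_le_iff of_nat_mult)
      qed (use \<epsilon>ge in simp)
      finally show ?thesis by (simp add: mult.assoc)
    qed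
    have BadD: "Bad \<subseteq> D" by (auto simp: Bad_def)
    have good: "\<And>a b v. v \<in> D \<Longrightarrow> v \<notin> Bad \<Longrightarrow> a \<in> G \<Longrightarrow> b \<in> G \<Longrightarrow> \<sigma> (a * b) v = \<sigma> a (\<sigma> b v)"
      by (auto simp: Bad_def)
    define N where "N = {..<d} \<times> D"
    define R where "R = {..<d} \<times> Bad"
    have fN: "finite N" using fD by (simp add: N_def)
    have RN: "R \<subseteq> N" using BadD by (auto simp: R_def N_def)
    have cardR: "card R = d * card Bad" by (simp add: R_def card_cartesian_product)
    define A where "A = Tm d D \<sigma> X"
    define B where "B = Tm d D \<sigma> Y"
    define T where "T = Tm d D \<sigma> (ma_mat_mult d Y X)"
    define \<Phi> where "\<Phi> = (\<lambda>x. T x - x)"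
    have lA: "lin A" and lB: "lin B" and lT: "lin T" by (simp_all add: A_def B_def T_def Tm_lin)
    have lP: "lin \<Phi>" unfolding \<Phi>_def by (rule lin_minus_id[OF lT])
    have AV: "A ` supp_on N \<subseteq> supp_on N" unfolding A_def N_def by (rule Tm_supp)
    have BV: "B ` supp_on N \<subseteq> supp_on N" unfolding B_def N_def by (rule Tm_supp)
    have TV: "T ` supp_on N \<subseteq> supp_on N" unfolding T_def N_def by (rule Tm_supp)
    have h1: "B (A y) - y \<in> supp_on R" if y: "y \<in> supp_on N" for y
      unfolding supp_on_def
    proof (intro CollectI allI impI)
      fix q assume q: "q \<notin> R"
      obtain i v where qiv: "q = (i, v)" by (cases q)
      show "(B (A y) - y) q = 0"
      proof (cases "i < d \<and> v \<in> D")
        case True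
        then have vB: "v \<notin> Bad" using q qiv by (auto simp: R_def)
        have "B (A y) (i, v) = Tm d D \<sigma> (ma_mat_mult d X Y) y (i, v)"
          unfolding A_def B_def
          by (rule Tm_mult[OF fG XG YG _ _ \<sigma>D, symmetric]) (use True vB good in auto)
        also have "\<dots> = Tm d D \<sigma> ma_mat_one y (i, v)" using Tm_cong[OF XY] by simp
        also have "\<dots> = y (i, v)" using Tm_one True \<sigma>1 by blast
        finally show ?thesis using qiv by simp
      next
        case False
        then have "B (A y) (i, v) = 0" unfolding B_def by (rule Tm_out)
        moreover have "y (i, v) = 0" using y False by (auto simp: supp_on_def N_def)
        ultimately show ?thesis using qiv by simp
      qed
    qed
    have h2: "\<Phi> z - (A (B z) - z) \<in> supp_on R" if z: "z \<in> supp_on N" for z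
      unfolding supp_on_def
    proof (intro CollectI allI impI)
      fix q assume q: "q \<notin> R"
      obtain i v where qiv: "q = (i, v)" by (cases q)
      show "(\<Phi> z - (A (B z) - z)) q = 0"
      proof (cases "i < d \<and> v \<in> D")
        case True
        then have vB: "v \<notin> Bad" using q qiv by (auto simp: R_def)
        have "T z (i, v) = A (B z) (i, v)"
          unfolding A_def B_def T_def
          by (rule Tm_mult[OF fG YG XG _ _ \<sigma>D]) (use True vB good in auto)
        then show ?thesis using qiv by (simp add: \<Phi>_def)
      next
        case False
        then have "T z (i, v) = 0" unfolding T_def by (rule Tm_out)
        moreover have "A (B z) (i, v) = 0" using False unfolding A_def by (rule Tm_out)
        ultimately show ?thesis using qiv by (simp add: \<Phi>_def)
      qed
    qed
    have up: "fv.dim (\<Phi> ` supp_on N) \<le> 3 * card R"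
      by (rule core_upper[OF fN RN lA lB lP AV BV h1 h2])
    define D' where "D' = {v\<in>D. \<forall>k\<in>F. k \<noteq> k0 \<longrightarrow> \<sigma> k v \<noteq> \<sigma> k0 v}"
    have D'D: "D' \<subseteq> D" by (auto simp: D'_def)
    have cardDD': "real (card (D - D')) \<le> real f * (\<epsilon> * real (card D))"
    proof -
      have "D - D' = (\<Union>k\<in>F - {k0}. {v\<in>D. \<sigma> k v = \<sigma> k0 v})" by (auto simp: D'_def)
      then have "real (card (D - D')) \<le> real (card (F - {k0})) * (\<epsilon> * real (card D))"
        using card_UN_real[of "F - {k0}" "\<lambda>k. {v\<in>D. \<sigma> k v = \<sigma> k0 v}" "\<epsilon> * real (card D)"]
          fF ham_ge[OF fD Dne ham3] k0F by auto
      also have "\<dots> \<le> real f * (\<epsilon> * real (card D))"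
        using \<epsilon>ge card_mono[OF fF, of "F - {k0}"] by (intro mult_right_mono) (auto simp: f_def)
      finally show ?thesis .
    qed
    have cardD': "real (card D) - real f * (\<epsilon> * real (card D)) \<le> real (card D')"
    proof -
      have "card (D - D') = card D - card D'" using card_Diff_subset[OF finite_subset[OF D'D fD] D'D] .
      moreover have "card D' \<le> card D" using card_mono[OF fD D'D] .
      ultimately have "real (card D) = real (card D') + real (card (D - D'))" by simp
      then show ?thesis using cardDD' by linarith
    qed
    define conf where "conf v w \<longleftrightarrow> (\<exists>k\<in>F. \<sigma> k v = \<sigma> k0 w)" for v w
    have deg: "card {w\<in>D'. conf v w \<or> conf w v} \<le> 2 * f * \<Delta>" if v: "v \<in> D'" for v
    proof -
      have vD: "v \<in> D" using v D'D by auto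
      have sub: "{w\<in>D'. conf v w \<or> conf w v} \<subseteq> (\<Union>k\<in>F. {w\<in>D. \<sigma> k0 w = \<sigma> k v}) \<union> (\<Union>k\<in>F. {w\<in>D. \<sigma> k w = \<sigma> k0 v})"
        using D'D by (auto simp: conf_def)
      have c1: "card (\<Union>k\<in>F. {w\<in>D. \<sigma> k0 w = \<sigma> k v}) \<le> f * \<Delta>"
      proof -
        have "card (\<Union>k\<in>F. {w\<in>D. \<sigma> k0 w = \<sigma> k v}) \<le> (\<Sum>k\<in>F. card {w\<in>D. \<sigma> k0 w = \<sigma> k v})"
          using fF by (rule card_UN_le)
        also have "\<dots> \<le> of_nat (card F) * \<Delta>"
        proof (rule sum_bounded_above)
          fix k assume "k \<in> F"
          then have "\<sigma> k v \<in> D" using \<sigma>D vD by auto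
          then show "card {w\<in>D. \<sigma> k0 w = \<sigma> k v} \<le> \<Delta>" using pre4[OF k0F] by blast
        qed
        finally show ?thesis by (simp add: f_def)
      qed
      have c2: "card (\<Union>k\<in>F. {w\<in>D. \<sigma> k w = \<sigma> k0 v}) \<le> f * \<Delta>"
      proof -
        have "card (\<Union>k\<in>F. {w\<in>D. \<sigma> k w = \<sigma> k0 v}) \<le> (\<Sum>k\<in>F. card {w\<in>D. \<sigma> k w = \<sigma> k0 v})"
          using fF by (rule card_UN_le)
        also have "\<dots> \<le> of_nat (card F) * \<Delta>"
        proof (rule sum_bounded_above)
          fix k assume "k \<in> F"
          have "\<sigma> k0 v \<in> D" using \<sigma>D vD by auto
          then show "card {w\<in>D. \<sigma> k w = \<sigma> k0 v} \<le> \<Delta>" using pre4[OF \<open>k \<in> F\<close>] by blast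
        qed
        finally show ?thesis by (simp add: f_def)
      qed
      have "card {w\<in>D'. conf v w \<or> conf w v}
          \<le> card ((\<Union>k\<in>F. {w\<in>D. \<sigma> k0 w = \<sigma> k v}) \<union> (\<Union>k\<in>F. {w\<in>D. \<sigma> k w = \<sigma> k0 v}))"
        by (rule card_mono[OF _ sub]) (use fF fD in auto)
      also have "\<dots> \<le> card (\<Union>k\<in>F. {w\<in>D. \<sigma> k0 w = \<sigma> k v}) + card (\<Union>k\<in>F. {w\<in>D. \<sigma> k w = \<sigma> k0 v})"
        by (rule card_Un_le)
      finally show ?thesis using c1 c2 by simp
    qed
    obtain W where W: "W \<subseteq> D'" "\<forall>v\<in>W. \<forall>w\<in>W. v \<noteq> w \<longrightarrow> \<not> conf v w"
      "card D' \<le> (2 * f * \<Delta> + 1) * card W"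
    proof -
      have "\<exists>W \<subseteq> D'. (\<forall>v\<in>W. \<forall>w\<in>W. v \<noteq> w \<longrightarrow> \<not> conf v w) \<and> card D' \<le> (2 * f * \<Delta> + 1) * card W"
        by (rule greedy[OF finite_subset[OF D'D fD] deg])
      then obtain W0 where "W0 \<subseteq> D'" "\<forall>v\<in>W0. \<forall>w\<in>W0. v \<noteq> w \<longrightarrow> \<not> conf v w" "card D' \<le> (2 * f * \<Delta> + 1) * card W0"
        by (elim exE conjE)
      then show ?thesis by (rule that)
    qed
    have fW: "finite W" using finite_subset[OF W(1) finite_subset[OF D'D fD]] .
    have WD: "W \<subseteq> D" using W(1) D'D by (rule subset_trans)
    define c where "c = ma_mat_mult d Y X j0 i0 k0 - (ma_mat_one j0 i0 :: 'm \<Rightarrow> 'k) k0"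
    have c0: "c \<noteq> 0" using hk0 by (simp add: c_def)
    define \<pi>2 :: "(nat \<times> nat \<Rightarrow> 'k) \<Rightarrow> (nat \<times> nat \<Rightarrow> 'k)"
      where "\<pi>2 y = (\<lambda>q. if fst q = i0 \<and> snd q \<in> W then y q else 0)" for y
    have l\<pi>2: "lin \<pi>2" by (auto simp: lin_def \<pi>2_def fun_eq_iff)
    have Tsum: "T x (i0, v) = (\<Sum>j<d. \<Sum>k\<in>F. ma_mat_mult d Y X j i0 k * x (j, \<sigma> k v))" if "v \<in> D" for x v
      unfolding T_def by (rule Tm_F[OF fF _ ji0(2) that]) (rule YXF)
    have key: "\<pi>2 (\<Phi> (ev (j0, \<sigma> k0 w))) = sc c (ev (i0, w))" if w: "w \<in> W" for w
    proof
      fix q :: "nat \<times> nat"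
      obtain i v where qiv: "q = (i, v)" by (cases q)
      let ?x = "ev (j0, \<sigma> k0 w) :: nat \<times> nat \<Rightarrow> 'k"
      show "\<pi>2 (\<Phi> ?x) q = sc c (ev (i0, w)) q"
      proof (cases "i = i0 \<and> v \<in> W")
        case False
        then have "(i, v) \<noteq> (i0, w)" using w by auto
        then show ?thesis using False qiv by (auto simp: \<pi>2_def ev_def)
      next
        case True
        then have ii0: "i = i0" and vW: "v \<in> W" by auto
        have vD: "v \<in> D" using vW WD by auto
        have vD': "v \<in> D'" using vW W(1) by auto
        have "T ?x (i0, v) = (\<Sum>j<d. \<Sum>k\<in>F. ma_mat_mult d Y X j i0 k * ?x (j, \<sigma> k v))"
          using Tsum[OF vD] .
        also have "\<dots> = (\<Sum>j<d. if j = j0 then (\<Sum>k\<in>F. if \<sigma> k v = \<sigma> k0 w then ma_mat_mult d Y X j0 i0 k else 0) else 0)"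
          by (intro sum.cong refl) (auto simp: ev_def intro!: sum.cong)
        also have "\<dots> = (\<Sum>k\<in>F. if \<sigma> k v = \<sigma> k0 w then ma_mat_mult d Y X j0 i0 k else 0)"
          using ji0(1) by (simp add: sum.delta')
        finally have Tx: "T ?x (i0, v) = (\<Sum>k\<in>F. if \<sigma> k v = \<sigma> k0 w then ma_mat_mult d Y X j0 i0 k else 0)" .
        show ?thesis
        proof (cases "v = w")
          case True
          have "(\<Sum>k\<in>F. if \<sigma> k v = \<sigma> k0 w then ma_mat_mult d Y X j0 i0 k else 0)
              = (\<Sum>k\<in>F. if k = k0 then ma_mat_mult d Y X j0 i0 k else 0)"
            using vD' True by (intro sum.cong refl) (auto simp: D'_def)
          also have "\<dots> = ma_mat_mult d Y X j0 i0 k0" using k0F fF by (simp add: sum.delta')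
          finally have T1: "T ?x (i0, v) = ma_mat_mult d Y X j0 i0 k0" using Tx by simp
          have x1: "?x (i0, v) = (ma_mat_one j0 i0 :: 'm \<Rightarrow> 'k) k0"
          proof (cases "k0 = 1")
            case True
            then show ?thesis using \<sigma>1[OF vD] \<open>v = w\<close> by (auto simp: ev_def ma_mat_one_def ma_one_def)
          next
            case False
            then have "\<sigma> 1 v \<noteq> \<sigma> k0 v" using vD' oneF by (auto simp: D'_def)
            then have "v \<noteq> \<sigma> k0 w" using \<sigma>1[OF vD] \<open>v = w\<close> by simp
            then show ?thesis using False by (auto simp: ev_def ma_mat_one_def ma_one_def)
          qed
          show ?thesis using T1 x1 qiv ii0 vW True by (simp add: \<pi>2_def \<Phi>_def c_def ev_def)
        next
          case False
          have nc: "\<not> conf v w" using W(2) vW w False by blast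
          have "(\<Sum>k\<in>F. if \<sigma> k v = \<sigma> k0 w then ma_mat_mult d Y X j0 i0 k else 0) = 0"
            using nc by (intro sum.neutral) (auto simp: conf_def)
          then have T0: "T ?x (i0, v) = 0" using Tx by simp
          have "\<sigma> 1 v \<noteq> \<sigma> k0 w" using nc oneF by (auto simp: conf_def)
          then have "?x (i0, v) = 0" using \<sigma>1[OF vD] by (auto simp: ev_def)
          then show ?thesis using T0 qiv ii0 vW False by (simp add: \<pi>2_def \<Phi>_def ev_def)
        qed
      qed
    qed
    have sub: "(\<lambda>p. sc c (ev p)) ` ({i0} \<times> W) \<subseteq> \<pi>2 ` \<Phi> ` supp_on N"
    proof
      fix e assume "e \<in> (\<lambda>p. sc c (ev p)) ` ({i0} \<times> W)"
      then obtain w where w: "w \<in> W" "e = sc c (ev (i0, w))" by auto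
      have "(j0, \<sigma> k0 w) \<in> N" using ji0(1) \<sigma>D w WD by (auto simp: N_def)
      then have "ev (j0, \<sigma> k0 w) \<in> supp_on N" by (rule ev_in_supp)
      then show "e \<in> \<pi>2 ` \<Phi> ` supp_on N" using key[OF w(1)] w(2) by (metis image_eqI)
    qed
    have indW: "fv.independent ((\<lambda>p. sc c (ev p)) ` ({i0} \<times> W) :: (nat \<times> nat \<Rightarrow> 'k) set)"
      using indep_ev[of "{i0} \<times> W" c] fW c0 by simp
    have PV: "\<Phi> ` supp_on N \<subseteq> supp_on N"
    proof
      fix y assume "y \<in> \<Phi> ` supp_on N"
      then obtain z where z: "z \<in> supp_on N" "y = T z - z" by (auto simp: \<Phi>_def)
      have "T z \<in> supp_on N" using TV z(1) by auto
      then show "y \<in> supp_on N" using z by (auto simp: supp_on_def)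
    qed
    have piV: "\<pi>2 ` \<Phi> ` supp_on N \<subseteq> supp_on N"
    proof
      fix y assume "y \<in> \<pi>2 ` \<Phi> ` supp_on N"
      then obtain z where z: "z \<in> supp_on N" "y = \<pi>2 (\<Phi> z)" by auto
      have "\<Phi> z \<in> supp_on N" using PV z(1) by auto
      then show "y \<in> supp_on N" using z by (auto simp: supp_on_def \<pi>2_def)
    qed
    have "card W = card ({i0} \<times> W)" by (simp add: card_cartesian_product)
    also have "\<dots> = card ((\<lambda>p. sc c (ev p)) ` ({i0} \<times> W) :: (nat \<times> nat \<Rightarrow> 'k) set)"
      by (rule card_image[symmetric], rule inj_on_subset[OF inj_sc_ev[OF c0]]) simp
    also have "\<dots> \<le> fv.dim (\<pi>2 ` \<Phi> ` supp_on N)" by (rule dim_ge_indep[OF fN piV sub indW])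
    also have "\<dots> \<le> fv.dim (\<Phi> ` supp_on N)" by (rule dim_image_le'[OF fN PV l\<pi>2])
    also have "\<dots> \<le> 3 * card R" by (rule up)
    finally have cardW: "card W \<le> 3 * d * card Bad" using cardR by simp
    have nat1: "card D' \<le> (2 * f * \<Delta> + 1) * 3 * d * card Bad"
    proof -
      have "(2 * f * \<Delta> + 1) * card W \<le> (2 * f * \<Delta> + 1) * (3 * d * card Bad)"
        using cardW by (rule mult_left_mono) simp
      moreover have "(2 * f * \<Delta> + 1) * (3 * d * card Bad) = (2 * f * \<Delta> + 1) * 3 * d * card Bad"
        by (simp only: mult.assoc)
      ultimately show ?thesis using W(3) by linarith
    qed
    define M where "M = (2 * f * \<Delta> + 1) * 3 * d"
    have "real (card D') \<le> real M * real (card Bad)"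
      using nat1 unfolding M_def by (metis of_nat_le_iff of_nat_mult)
    also have "\<dots> \<le> real M * (real f * real f * \<epsilon> * real (card D))"
      by (rule mult_left_mono[OF cardBad]) simp
    also have "\<dots> = real Kc * \<epsilon> * real (card D)"
      by (simp add: M_def Kc_def)
    finally have fin1: "real (card D) - real f * (\<epsilon> * real (card D)) \<le> real Kc * \<epsilon> * real (card D)"
      using cardD' by linarith
    have fin2: "real (card D) \<le> ((real f + real Kc) * \<epsilon>) * real (card D)"
      using fin1 by (simp add: algebra_simps)
    have e1: "(real f + real Kc) * \<epsilon> < 1"
      by (simp add: \<epsilon>_def field_simps)
    have "((real f + real Kc) * \<epsilon>) * real (card D) < 1 * real (card D)"
      by (rule mult_strict_right_mono[OF e1 Dpos])
    then show False using fin2 by simp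
  qed
qed

end
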